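(* Let $G$ be the graph with vertex set $\mathbb{Z}_{16}$ in which $i$ and $j$ are adjacent iff $i-j\in\{\pm1,\pm2,\pm4\}\pmod{16}$, and let $H$ be the graph with vertex set $\mathbb{Z}_{16}$ in which $i$ and $j$ are adjacent iff $i-j\in\{\pm1,\pm3,\pm4\}\pmod{16}$. Then $G$ and $H$ are distinguishable by EB-1WL but not distinguishable by NC-1WL.
   Context: All graphs are finite, simple and undirected; $N(v)$ denotes the neighborhood of $v$. An ordered edge of $G=(V,E)$ is a pair $(u,v)$ with $\{u,v\}\in E$. EB-1WL coloring: $\mathrm{eb}^{(0)}(G,(u,v))=1$ for every ordered edge, and $\mathrm{eb}^{(\ell+1)}(G,(u,v)) = \big(\mathrm{eb}^{(\ell)}(G,(u,v)),\ \{\!\{\mathrm{eb}^{(\ell)}(G,(u,x)) : x\in N(u)\}\!\},\ \{\!\{(\mathrm{eb}^{(\ell)}(G,(u,y)),\mathrm{eb}^{(\ell)}(G,(v,y))) : y\in N(u)\cap N(v)\}\!\},\ \{\!\{\mathrm{eb}^{(\ell)}(G,(v,z)) : z\in N(v)\}\!\}\big)$. $\mathrm{eb}^{(\ell)}(G)$ is the multiset of $\mathrm{eb}^{(\ell)}(G,(u,v))$ over all ordered edges. Graphs are distinguishable by EB-1WL if they have different numbers of vertices or there is $\ell$ with $\mathrm{eb}^{(\ell)}(G)\neq\mathrm{eb}^{(\ell)}(H)$. NC-1WL coloring of vertices: $\mathrm{nc}^{(0)}(G,v)=1$ and $\mathrm{nc}^{(\ell+1)}(G,v)=\big(\mathrm{nc}^{(\ell)}(G,v),\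 \{\!\{\mathrm{nc}^{(\ell)}(G,u): u\in N(v)\}\!\},\ \{\!\{(\mathrm{nc}^{(\ell)}(G,u),\mathrm{nc}^{(\ell)}(G,w)) : u,w\in N(v),\ \{u,w\}\in E\}\!\}\big)$. $\mathrm{nc}^{(\ell)}(G)=\{\!\{\mathrm{nc}^{(\ell)}(G,v): v\in V\}\!\}$; graphs are distinguishable by NC-1WL if there is $\ell$ with $\mathrm{nc}^{(\ell)}(G)\neq\mathrm{nc}^{(\ell)}(H)$. Colors are nested tuples/multisets, comparable across graphs. *)

theory Defs
  imports Main "HOL-Library.Multiset"
begin

text \<open>Graphs are given by a finite vertex set V and a symmetric irreflexive
adjacency relation E. Colours are nested tuples/multisets, represented by a
single datatype so that colours from different graphs are comparable.\<close>

datatype color =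
    CInit
  | CEB color "color multiset" "(color \<times> color) multiset" "color multiset"
  | CNC color "color multiset" "(color \<times> color) multiset"

definition nbhd :: "'a set \<Rightarrow> ('a \<Rightarrow> 'a \<Rightarrow> bool) \<Rightarrow> 'a \<Rightarrow> 'a set" where
  "nbhd V E v = {x \<in> V. E v x}"

fun eb :: "nat \<Rightarrow> 'a set \<Rightarrow> ('a \<Rightarrow> 'a \<Rightarrow> bool) \<Rightarrow> 'a \<Rightarrow> 'a \<Rightarrow> color" where
  "eb 0 V E u v = CInit"
| "eb (Suc l) V E u v =
     CEB (eb l V E u v)
         (image_mset (\<lambda>x. eb l V E u x) (mset_set (nbhd V E u)))
         (image_mset (\<lambda>y. (eb l V E u y, eb l V E v y))
             (mset_set (nbhd V E u \<inter> nbhd V E v)))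
         (image_mset (\<lambda>z. eb l V E v z) (mset_set (nbhd V E v)))"

definition ordered_edges :: "'a set \<Rightarrow> ('a \<Rightarrow> 'a \<Rightarrow> bool) \<Rightarrow> ('a \<times> 'a) set" where
  "ordered_edges V E = {(u, v). u \<in> V \<and> v \<in> V \<and> E u v}"

definition eb_colors :: "nat \<Rightarrow> 'a set \<Rightarrow> ('a \<Rightarrow> 'a \<Rightarrow> bool) \<Rightarrow> color multiset" where
  "eb_colors l V E = image_mset (\<lambda>(u, v). eb l V E u v) (mset_set (ordered_edges V E))"

definition eb_distinguishable ::
  "'a set \<Rightarrow> ('a \<Rightarrow> 'a \<Rightarrow> bool) \<Rightarrow> 'b set \<Rightarrow> ('b \<Rightarrow> 'b \<Rightarrow> bool) \<Rightarrow> bool" where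
  "eb_distinguishable V E V' E' \<longleftrightarrow>
     card V \<noteq> card V' \<or> (\<exists>l. eb_colors l V E \<noteq> eb_colors l V' E')"

fun nc :: "nat \<Rightarrow> 'a set \<Rightarrow> ('a \<Rightarrow> 'a \<Rightarrow> bool) \<Rightarrow> 'a \<Rightarrow> color" where
  "nc 0 V E v = CInit"
| "nc (Suc l) V E v =
     CNC (nc l V E v)
         (image_mset (\<lambda>u. nc l V E u) (mset_set (nbhd V E v)))
         (image_mset (\<lambda>(u, w). (nc l V E u, nc l V E w))
             (mset_set {(u, w). u \<in> nbhd V E v \<and> w \<in> nbhd V E v \<and> E u w}))"

definition nc_colors :: "nat \<Rightarrow> 'a set \<Rightarrow> ('a \<Rightarrow> 'a \<Rightarrow> bool) \<Rightarrow> color multiset" where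
  "nc_colors l V E = image_mset (nc l V E) (mset_set V)"

definition nc_distinguishable ::
  "'a set \<Rightarrow> ('a \<Rightarrow> 'a \<Rightarrow> bool) \<Rightarrow> 'b set \<Rightarrow> ('b \<Rightarrow> 'b \<Rightarrow> bool) \<Rightarrow> bool" where
  "nc_distinguishable V E V' E' \<longleftrightarrow> (\<exists>l. nc_colors l V E \<noteq> nc_colors l V' E')"

definition Z16 :: "int set" where
  "Z16 = {0..<16}"

definition G_adj :: "int \<Rightarrow> int \<Rightarrow> bool" where
  "G_adj i j \<longleftrightarrow> (i - j) mod 16 \<in> {1, 15, 2, 14, 4, 12}"

definition H_adj :: "int \<Rightarrow> int \<Rightarrow> bool" where
  "H_adj i j \<longleftrightarrow> (i - j) mod 16 \<in> {1, 15, 3, 13, 4, 12}"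

end

theory Submission imports Defs begin
lemma Z: "Z16 = set [0..15]" unfolding Z16_def set_upto by auto
lemma P: "{(u, w). u \<in> A \<and> w \<in> A \<and> E u w} = Set.filter (\<lambda>(u,w). E u w) (A \<times> A)" by auto

fun cc :: "nat \<Rightarrow> color" where
  "cc 0 = CInit"
| "cc (Suc l) = CNC (cc l) (replicate_mset 6 (cc l)) (replicate_mset 12 (cc l, cc l))"

lemma img_const: "(\<forall>x\<in>#M. f x = c) \<Longrightarrow> image_mset f M = replicate_mset (size M) c"
  by (induction M) auto

lemma nc_const:
  assumes fin: "finite V"
    and d: "\<forall>v\<in>V. card (nbhd V E v) = 6"
    and t: "\<forall>v\<in>V. card {(u, w). u \<in> nbhd V E v \<and> w \<in> nbhd V E v \<and> E u w} = 12"
  shows "\<forall>v\<in>V. nc l V E v = cc l"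
proof (induction l)
  case 0 then show ?case by simp
next
  case (Suc l)
  show ?case
  proof
    fix v assume v: "v \<in> V"
    have sub: "nbhd V E v \<subseteq> V" unfolding nbhd_def by auto
    have fn: "finite (nbhd V E v)" using fin sub finite_subset by blast
    let ?S = "{(u, w). u \<in> nbhd V E v \<and> w \<in> nbhd V E v \<and> E u w}"
    have fs: "finite ?S"
      by (rule finite_subset[of _ "nbhd V E v \<times> nbhd V E v"]) (use fn in auto)
    have 1: "image_mset (nc l V E) (mset_set (nbhd V E v)) = replicate_mset 6 (cc l)"
      using Suc sub fn d v by (subst img_const[where c="cc l"]) auto
    have 2: "image_mset (\<lambda>(u, w). (nc l V E u, nc l V E w)) (mset_set ?S) = replicate_mset 12 (cc l, cc l)"
      using Suc sub fs t v by (subst img_const[where c="(cc l, cc l)"]) auto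
    show "nc (Suc l) V E v = cc (Suc l)"
      using Suc v 1 2 by simp
  qed
qed

lemma ncG: "\<forall>v\<in>Z16. nc l Z16 G_adj v = cc l"
proof (rule nc_const)
  show "finite Z16" unfolding Z16_def by simp
  show "\<forall>v\<in>Z16. card (nbhd Z16 G_adj v) = 6"
    unfolding Z nbhd_def G_adj_def by code_simp
  show "\<forall>v\<in>Z16. card {(u, w). u \<in> nbhd Z16 G_adj v \<and> w \<in> nbhd Z16 G_adj v \<and> G_adj u w} = 12"
    unfolding P Z nbhd_def G_adj_def by code_simp
qed

lemma ncH: "\<forall>v\<in>Z16. nc l Z16 H_adj v = cc l"
proof (rule nc_const)
  show "finite Z16" unfolding Z16_def by simp
  show "\<forall>v\<in>Z16. card (nbhd Z16 H_adj v) = 6"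
    unfolding Z nbhd_def H_adj_def by code_simp
  show "\<forall>v\<in>Z16. card {(u, w). u \<in> nbhd Z16 H_adj v \<and> w \<in> nbhd Z16 H_adj v \<and> H_adj u w} = 12"
    unfolding P Z nbhd_def H_adj_def by code_simp
qed

lemma notnc: "\<not> nc_distinguishable Z16 G_adj Z16 H_adj"
proof -
  have "nc_colors l Z16 G_adj = nc_colors l Z16 H_adj" for l
  proof -
    have fZ: "finite Z16" unfolding Z16_def by simp
    have "nc_colors l Z16 G_adj = replicate_mset (card Z16) (cc l)"
      unfolding nc_colors_def using ncG fZ by (subst img_const[where c="cc l"]) auto
    moreover have "nc_colors l Z16 H_adj = replicate_mset (card Z16) (cc l)"
      unfolding nc_colors_def using ncH fZ by (subst img_const[where c="cc l"]) auto
    ultimately show ?thesis by simp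
  qed
  then show ?thesis unfolding nc_distinguishable_def by simp
qed

fun thd :: "color \<Rightarrow> nat" where
  "thd (CEB a b c d) = size c"
| "thd _ = 0"

lemma Hcommon: "\<forall>u\<in>Z16. \<forall>v\<in>Z16. H_adj u v \<longrightarrow> card (nbhd Z16 H_adj u \<inter> nbhd Z16 H_adj v) = 2"
  unfolding Z nbhd_def H_adj_def by code_simp

lemma Gcommon: "card (nbhd Z16 G_adj 0 \<inter> nbhd Z16 G_adj 4) = 1"
  unfolding Z nbhd_def G_adj_def by code_simp

lemma ebd: "eb_distinguishable Z16 G_adj Z16 H_adj"
proof -
  have fZ: "finite Z16" unfolding Z16_def by simp
  have fo: "finite (ordered_edges Z16 E)" for E :: "int \<Rightarrow> int \<Rightarrow> bool"
    by (rule finite_subset[of _ "Z16 \<times> Z16"]) (auto simp: ordered_edges_def fZ)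
  have fn: "finite (nbhd Z16 E u)" for E :: "int \<Rightarrow> int \<Rightarrow> bool" and u
    by (rule finite_subset[of _ Z16]) (auto simp: nbhd_def fZ)
  have e01: "(0, 4) \<in> ordered_edges Z16 G_adj"
    unfolding ordered_edges_def Z16_def G_adj_def by simp
  have "1 \<in># image_mset thd (eb_colors 1 Z16 G_adj)"
  proof -
    have "eb 1 Z16 G_adj 0 4 \<in># eb_colors 1 Z16 G_adj"
      unfolding eb_colors_def using e01 fo by force
    moreover have "thd (eb 1 Z16 G_adj 0 4) = 1"
      using Gcommon fn by (simp add: numeral_eq_Suc)
    ultimately show ?thesis by force
  qed
  moreover have "1 \<notin># image_mset thd (eb_colors 1 Z16 H_adj)"
  proof
    assume "1 \<in># image_mset thd (eb_colors 1 Z16 H_adj)"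
    then obtain u v where uv: "(u, v) \<in> ordered_edges Z16 H_adj" "thd (eb 1 Z16 H_adj u v) = 1"
      unfolding eb_colors_def using fo by auto
    have "card (nbhd Z16 H_adj u \<inter> nbhd Z16 H_adj v) = 2"
      using Hcommon uv(1) unfolding ordered_edges_def by auto
    moreover have "thd (eb 1 Z16 H_adj u v) = card (nbhd Z16 H_adj u \<inter> nbhd Z16 H_adj v)"
      using fn by (simp add: numeral_eq_Suc)
    ultimately show False using uv(2) by simp
  qed
  ultimately have "eb_colors 1 Z16 G_adj \<noteq> eb_colors 1 Z16 H_adj" by metis
  then show ?thesis unfolding eb_distinguishable_def by blast
qed

theorem mainTheorem4:
  shows "eb_distinguishable Z16 G_adj Z16 H_adj \<and> \<not> nc_distinguishable Z16 G_adj Z16 H_adj"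
  using ebd notnc by blast
end
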